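(* Let $n\in\mathbb{N}^*$, $\mu>0$, $\lambda>0$, and let $n_\mu(dt)=\frac{\mu^n}{(n-1)!}t^{n-1}e^{-\mu t}\mathbf{1}_{t>0}\,dt$ be the gamma law. Let $(C_i)_{i\ge1}$ be i.i.d. copies of a random variable $C$ with $\mathbb{P}(C>0)=1$ and $\mathbb{E}[C^2]<\infty$, $D_k=C_1+\dots+C_k$, and $L(s)=\mathbb{E}[e^{-sC}]$. Then $$\sum_{k\ge1}\mathbb{E}\Big[e^{-\lambda D_k}\int_0^{D_k}e^{\lambda t}n_\mu(dt)\Big]=\begin{cases}\dfrac{\mu^n}{(\mu-\lambda)^n}\Big(\dfrac{L(\lambda)}{1-L(\lambda)}-\displaystyle\sum_{i=0}^{n-1}\frac{(\mu-\lambda)^i}{i!}(-1)^i\Big(\frac{L}{1-L}\Big)^{(i)}(\mu)\Big) & \text{if }\lambda\ne\mu,\\[2ex] \dfrac{\mu^n}{n!}(-1)^n\Big(\dfrac{L}{1-L}\Big)^{(n)}(\mu) & \text{if }\lambda=\mu,\end{cases}$$ and $$\sum_{k\ge1}k\,\mathbb{E}\Big[e^{-\lambda D_k}\int_0^{D_k}e^{\lambda t}n_\mu(dt)\Big]=\begin{cases}\dfrac{\mu^n}{(\mu-\lambda)^n}\Big(\dfrac{L(\lambda)}{(1-L(\lambda))^2}-\displaystyle\sum_{i=0}^{n-1}\frac{(\mu-\lambda)^i}{i!}(-1)^i\Big(\frac{L}{(1-L)^2}\Big)^{(i)}(\mu)\Big) & \text{if }\lambda\ne\mu,\\[2ex]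 \dfrac{\mu^n}{n!}(-1)^n\Big(\dfrac{L}{(1-L)^2}\Big)^{(n)}(\mu) & \text{if }\lambda=\mu,\end{cases}$$ where $F^{(i)}$ denotes the $i$-th derivative of a function $F$. *)

theory Defs
  imports "HOL-Probability.Probability"
begin

definition gamma_density :: "nat \<Rightarrow> real \<Rightarrow> real \<Rightarrow> real" where
  "gamma_density n mu t = (if t > 0 then mu ^ n / fact (n - 1) * t ^ (n - 1) * exp (- mu * t) else 0)"

definition laplace_rv :: "'a measure \<Rightarrow> ('a \<Rightarrow> real) \<Rightarrow> real \<Rightarrow> real" where
  "laplace_rv M C s = (\<integral>\<omega>. exp (- s * C \<omega>) \<partial>M)"

end

theory Submission
  imports Defs
begin


lemma pow_le_exp: fixes x :: real assumes "x \<ge> 0" shows "x ^ j \<le> real j ^ j * exp x"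
proof (cases "j = 0")
  case True thus ?thesis using assms by simp
next
  case False
  have "x ^ j = real j ^ j * (x / real j) ^ j" using False by (simp add: power_divide)
  also have "(x / real j) ^ j \<le> (1 + x / real j) ^ j"
    using assms by (intro power_mono) auto
  also have "\<dots> \<le> exp x" using False assms by (intro exp_ge_one_plus_x_over_n_power_n) auto
  finally show ?thesis by (simp add: mult_left_mono)
qed

lemma pow_exp_bound: fixes x s :: real assumes "x \<ge> 0" "s > 0"
  shows "x ^ j * exp (- s * x) \<le> real j ^ j / s ^ j"
proof -
  have "(s*x) ^ j \<le> real j ^ j * exp (s*x)" using assms by (intro pow_le_exp) auto
  hence "s^j * x^j * exp (- s * x) \<le> real j ^ j * exp (s*x) * exp (-s*x)"
    by (simp add: power_mult_distrib mult_right_mono)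
  also have "\<dots> = real j ^ j" by (simp flip: exp_add)
  finally show ?thesis using assms by (simp add: field_simps)
qed

lemma exp_diff_bound: fixes u v :: real
  shows "\<bar>exp u - exp v\<bar> \<le> \<bar>u - v\<bar> * exp (max u v)"
proof -
  have *: "exp b - exp a \<le> (b - a) * exp b" if "a \<le> b" for a b :: real
  proof -
    have "1 - (b - a) \<le> exp (a - b)" using exp_ge_add_one_self[of "a - b"] by linarith
    hence "exp b * (1 - (b-a)) \<le> exp b * exp (a - b)" by (intro mult_left_mono) auto
    thus ?thesis by (simp add: algebra_simps flip: exp_add)
  qed
  show ?thesis
  proof (cases "u \<le> v")
    case True thus ?thesis using *[OF True] by (auto simp: max_def abs_if)
  next
    case False thus ?thesis using *[of v u] by (auto simp: max_def abs_if)
  qed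
qed


lemma (in prob_space) integrable_moment_exp:
  fixes Y :: "'a \<Rightarrow> real" and s :: real
  assumes Y: "Y \<in> borel_measurable M" "\<And>\<omega>. Y \<omega> \<ge> 0" and s: "s > 0"
  shows "integrable M (\<lambda>\<omega>. Y \<omega> ^ j * exp (- s * Y \<omega>))"
proof (rule integrable_const_bound[where B="real j ^ j / s ^ j"])
  show "AE x in M. norm (Y x ^ j * exp (- s * Y x)) \<le> real j ^ j / s ^ j"
    using pow_exp_bound[OF Y(2) s] by (simp add: Y(2))
qed (use Y in measurable)

lemma (in prob_space) deriv_moment_exp:
  fixes Y :: "'a \<Rightarrow> real" and s :: real
  assumes Y: "Y \<in> borel_measurable M" "\<And>\<omega>. Y \<omega> \<ge> 0" and s: "s > 0"
  shows "((\<lambda>s. \<integral>\<omega>. Y \<omega> ^ j * exp (- s * Y \<omega>) \<partial>M) has_real_derivative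
           - (\<integral>\<omega>. Y \<omega> ^ Suc j * exp (- s * Y \<omega>) \<partial>M)) (at s)"
proof -
  define \<phi> where "\<phi> = (\<lambda>s. \<integral>\<omega>. Y \<omega> ^ j * exp (- s * Y \<omega>) \<partial>M)"
  define T where "T = {-s/2<..<s/2}"
  have T: "open T" "0 \<in> T" using s by (auto simp: T_def)
  let ?q = "\<lambda>h \<omega>. Y \<omega> ^ j * ((exp (- (s + h) * Y \<omega>) - exp (- s * Y \<omega>)) / h)"
  have quot: "(\<phi> (s + h) - \<phi> s) / h = (\<integral>\<omega>. ?q h \<omega> \<partial>M)" if "h \<in> T" for h
  proof -
    have "s + h > 0" using that by (auto simp: T_def)
    hence i1: "integrable M (\<lambda>\<omega>. Y \<omega> ^ j * exp (- (s+h) * Y \<omega>))"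
      by (intro integrable_moment_exp Y)
    have i2: "integrable M (\<lambda>\<omega>. Y \<omega> ^ j * exp (- s * Y \<omega>))"
      by (intro integrable_moment_exp Y s)
    have "\<phi> (s + h) - \<phi> s = (\<integral>\<omega>. Y \<omega> ^ j * exp (- (s+h) * Y \<omega>) - Y \<omega> ^ j * exp (- s * Y \<omega>) \<partial>M)"
      unfolding \<phi>_def using Bochner_Integration.integral_diff[OF i1 i2] by simp
    also have "\<dots> / h = (\<integral>\<omega>. (Y \<omega> ^ j * exp (- (s+h) * Y \<omega>) - Y \<omega> ^ j * exp (- s * Y \<omega>)) / h \<partial>M)"
      by simp
    also have "\<dots> = (\<integral>\<omega>. ?q h \<omega> \<partial>M)"
      by (simp add: right_diff_distrib)
    finally show ?thesis .
  qed
  define C where "C = real (Suc j) ^ Suc j / (s/2) ^ Suc j"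
  have bound: "norm (?q h \<omega>) \<le> C" if "h \<in> T" "h \<noteq> 0" for h \<omega>
  proof -
    let ?y = "Y \<omega>"
    have y: "?y \<ge> 0" by (rule Y(2))
    have "\<bar>exp (- (s + h) * ?y) - exp (- s * ?y)\<bar> \<le> \<bar>(- (s + h) * ?y) - (- s * ?y)\<bar> * exp (max (- (s + h) * ?y) (- s * ?y))"
      by (rule exp_diff_bound)
    also have "\<bar>(- (s + h) * ?y) - (- s * ?y)\<bar> = \<bar>h\<bar> * ?y" using y by (simp add: abs_mult algebra_simps)
    also have m: "max (- (s + h) * ?y) (- s * ?y) \<le> - (s/2) * ?y"
    proof -
      have "(s/2) * ?y \<le> (s+h) * ?y" using that y by (intro mult_right_mono) (auto simp: T_def)
      moreover have "(s/2) * ?y \<le> s * ?y" using y s by (intro mult_right_mono) auto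
      ultimately show ?thesis by (simp add: algebra_simps)
    qed
    hence "exp (max (- (s + h) * ?y) (- s * ?y)) \<le> exp (- (s/2) * ?y)" by simp
    finally have "\<bar>exp (- (s + h) * ?y) - exp (- s * ?y)\<bar> \<le> \<bar>h\<bar> * ?y * exp (- (s/2) * ?y)"
      using y by (simp add: mult_left_mono)
    hence "\<bar>(exp (- (s + h) * ?y) - exp (- s * ?y)) / h\<bar> \<le> ?y * exp (- (s/2) * ?y)"
      using that by (simp add: abs_divide divide_le_eq mult_ac)
    hence qb: "\<bar>(exp (- (s + h) * ?y) - exp (- s * ?y)) / h\<bar> \<le> ?y * exp (- (s/2) * ?y)" .
    have "norm (?q h \<omega>) = ?y ^ j * \<bar>(exp (- (s + h) * ?y) - exp (- s * ?y)) / h\<bar>"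
      using y by (simp add: abs_mult)
    also have "\<dots> \<le> ?y ^ j * (?y * exp (- (s/2) * ?y))"
      using qb y by (intro mult_left_mono) auto
    also have "\<dots> = ?y ^ Suc j * exp (- (s/2) * ?y)" by simp
    also have "\<dots> \<le> C" unfolding C_def using s y by (intro pow_exp_bound) auto
    finally show ?thesis .
  qed
  have lim1: "((\<lambda>h. (exp (- (s + h) * y) - exp (- s * y)) / h) \<longlongrightarrow> - y * exp (- s * y)) (at 0)" for y :: real
  proof -
    have "((\<lambda>t. exp (- t * y)) has_real_derivative (exp (- s * y) * (- y))) (at s)"
      by (auto intro!: derivative_eq_intros)
    thus ?thesis unfolding DERIV_def by (simp add: mult_ac)
  qed
  have "((\<lambda>h. (\<phi> (s + h) - \<phi> s) / h) \<longlongrightarrow> - (\<integral>\<omega>. Y \<omega> ^ Suc j * exp (- s * Y \<omega>) \<partial>M)) (at 0 within T)"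
  proof (subst tendsto_at_iff_sequentially, intro allI impI)
    fix H :: "nat \<Rightarrow> real" assume H: "\<forall>i. H i \<in> T - {0}" "H \<longlonglongrightarrow> 0"
    have "(\<lambda>i. \<integral>\<omega>. ?q (H i) \<omega> \<partial>M) \<longlonglongrightarrow> (\<integral>\<omega>. - (Y \<omega> ^ Suc j * exp (- s * Y \<omega>)) \<partial>M)"
    proof (rule integral_dominated_convergence[where w="\<lambda>_. C"])
      show "(\<lambda>\<omega>. - (Y \<omega> ^ Suc j * exp (- s * Y \<omega>))) \<in> borel_measurable M" using Y by measurable
      show "(\<lambda>\<omega>. ?q (H i) \<omega>) \<in> borel_measurable M" for i using Y by measurable
      show "integrable M (\<lambda>_. C)" by simp
      show "AE \<omega> in M. norm (?q (H i) \<omega>) \<le> C" for i using H bound by auto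
      show "AE \<omega> in M. (\<lambda>i. ?q (H i) \<omega>) \<longlonglongrightarrow> - (Y \<omega> ^ Suc j * exp (- s * Y \<omega>))"
      proof (intro AE_I2)
        fix \<omega>
        have "((\<lambda>h. (exp (- (s + h) * Y \<omega>) - exp (- s * Y \<omega>)) / h) \<circ> H) \<longlonglongrightarrow> - Y \<omega> * exp (- s * Y \<omega>)"
          using lim1[of "Y \<omega>"] H unfolding tendsto_at_iff_sequentially by auto
        hence "(\<lambda>i. Y \<omega> ^ j * ((exp (- (s + H i) * Y \<omega>) - exp (- s * Y \<omega>)) / H i)) \<longlonglongrightarrow> Y \<omega> ^ j * (- Y \<omega> * exp (- s * Y \<omega>))"
          by (intro tendsto_mult_left) (simp add: comp_def)
        thus "(\<lambda>i. ?q (H i) \<omega>) \<longlonglongrightarrow> - (Y \<omega> ^ Suc j * exp (- s * Y \<omega>))" by (simp add: mult_ac)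
      qed
    qed
    moreover have "(\<lambda>i. (\<phi> (s + H i) - \<phi> s) / H i) = (\<lambda>i. \<integral>\<omega>. ?q (H i) \<omega> \<partial>M)"
      using H quot by (intro ext) auto
    ultimately show "((\<lambda>h. (\<phi> (s + h) - \<phi> s) / h) \<circ> H) \<longlonglongrightarrow> - (\<integral>\<omega>. Y \<omega> ^ Suc j * exp (- s * Y \<omega>) \<partial>M)"
      by (simp add: comp_def del: power_Suc)
  qed
  hence "((\<lambda>h. (\<phi> (s + h) - \<phi> s) / h) \<longlongrightarrow> - (\<integral>\<omega>. Y \<omega> ^ Suc j * exp (- s * Y \<omega>) \<partial>M)) (at 0)"
    using at_within_open[OF T(2,1)] by simp
  thus ?thesis unfolding DERIV_def \<phi>_def .
qed



definition Dsum :: "(nat \<Rightarrow> 'a \<Rightarrow> real) \<Rightarrow> nat \<Rightarrow> 'a \<Rightarrow> real" where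
  "Dsum X k \<omega> = (\<Sum>i<k. X i \<omega>)"

definition EE :: "'a measure \<Rightarrow> (nat \<Rightarrow> 'a \<Rightarrow> real) \<Rightarrow> nat \<Rightarrow> nat \<Rightarrow> real \<Rightarrow> real" where
  "EE M X k j s = (\<integral>\<omega>. Dsum X k \<omega> ^ j * exp (- s * Dsum X k \<omega>) \<partial>M)"

locale core = prob_space M for M :: "'a measure" +
  fixes X :: "nat \<Rightarrow> 'a \<Rightarrow> real"
  assumes meas: "\<And>i. X i \<in> borel_measurable M"
    and indep: "indep_vars (\<lambda>_. borel) X UNIV"
    and ident: "\<And>i. distr M borel (X i) = distr M borel (X 0)"
    and nn: "\<And>i \<omega>. X i \<omega> \<ge> 0"
    and pos: "AE \<omega> in M. X 0 \<omega> > 0"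
begin

abbreviation "L \<equiv> laplace_rv M (X 0)"

lemma Dsum_meas[measurable]: "Dsum X k \<in> borel_measurable M"
  unfolding Dsum_def[abs_def] using meas by measurable

lemma Dsum_nn: "Dsum X k \<omega> \<ge> 0"
  unfolding Dsum_def using nn by (intro sum_nonneg) auto

lemma L_i: "(\<integral>\<omega>. exp (- s * X i \<omega>) \<partial>M) = L s"
proof -
  have "(\<integral>\<omega>. exp (- s * X i \<omega>) \<partial>M) = integral\<^sup>L (distr M borel (X i)) (\<lambda>x. exp (- s * x))"
    using meas by (subst integral_distr) auto
  also have "\<dots> = integral\<^sup>L (distr M borel (X 0)) (\<lambda>x. exp (- s * x))" by (simp add: ident[of i])
  also have "\<dots> = L s" unfolding laplace_rv_def using meas by (subst integral_distr) auto
  finally show ?thesis .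
qed

lemma L_nn: "L s \<ge> 0"
  unfolding laplace_rv_def by (intro integral_nonneg_AE) auto

lemma L_lt1: assumes s: "s > 0" shows "L s < 1"
proof -
  have int: "integrable M (\<lambda>\<omega>. 1 - exp (- s * X 0 \<omega>))"
    using integrable_moment_exp[OF meas nn s, of 0 0] by simp
  have nn': "AE \<omega> in M. 0 \<le> 1 - exp (- s * X 0 \<omega>)" using s nn by auto
  have "(\<integral>\<omega>. 1 - exp (- s * X 0 \<omega>) \<partial>M) \<noteq> 0"
  proof
    assume "(\<integral>\<omega>. 1 - exp (- s * X 0 \<omega>) \<partial>M) = 0"
    hence "AE \<omega> in M. 1 - exp (- s * X 0 \<omega>) = 0" using integral_nonneg_eq_0_iff_AE[OF int nn'] by simp
    with pos have "AE \<omega> in M. False"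
    proof eventually_elim
      case (elim \<omega>) thus False using s by simp
    qed
    thus False by simp
  qed
  moreover have "(\<integral>\<omega>. 1 - exp (- s * X 0 \<omega>) \<partial>M) \<ge> 0" using nn' by (intro integral_nonneg_AE)
  moreover have "(\<integral>\<omega>. 1 - exp (- s * X 0 \<omega>) \<partial>M) = 1 - L s"
    using integrable_moment_exp[OF meas nn s, of 0 0] unfolding laplace_rv_def
    by (subst Bochner_Integration.integral_diff) (auto simp: prob_space)
  ultimately show ?thesis by linarith
qed

lemma EE0: assumes s: "s > 0" shows "EE M X k 0 s = L s ^ k"
proof -
  have "EE M X k 0 s = (\<integral>\<omega>. (\<Prod>i\<in>{..<k}. exp (- s * X i \<omega>)) \<partial>M)"
    unfolding EE_def Dsum_def by (simp add: exp_sum sum_distrib_left flip: sum_negf)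
  also have "\<dots> = (\<Prod>i\<in>{..<k}. \<integral>\<omega>. exp (- s * X i \<omega>) \<partial>M)"
  proof (rule indep_vars_lebesgue_integral)
    show "indep_vars (\<lambda>_. borel) (\<lambda>i \<omega>. exp (- s * X i \<omega>)) {..<k}"
      by (rule indep_vars_compose2[where X=X and M'="\<lambda>_. borel"])
         (auto intro: indep_vars_subset[OF indep])
    show "integrable M (\<lambda>\<omega>. exp (- s * X i \<omega>))" for i
      using integrable_moment_exp[OF meas nn s, of i 0] by simp
  qed simp
  also have "\<dots> = L s ^ k" using L_i[of s] by simp
  finally show ?thesis .
qed

lemma EE_int: "s > 0 \<Longrightarrow> integrable M (\<lambda>\<omega>. Dsum X k \<omega> ^ j * exp (- s * Dsum X k \<omega>))"
  by (intro integrable_moment_exp Dsum_meas Dsum_nn)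

lemma EE_nn: "EE M X k j s \<ge> 0"
  unfolding EE_def using Dsum_nn by (intro integral_nonneg_AE) auto

lemma EE_bound: assumes s: "s > 0"
  shows "EE M X k j s \<le> real j ^ j / (s/2) ^ j * L (s/2) ^ k"
proof -
  have "EE M X k j s \<le> (\<integral>\<omega>. real j ^ j / (s/2) ^ j * exp (- (s/2) * Dsum X k \<omega>) \<partial>M)"
    unfolding EE_def
  proof (intro integral_mono EE_int s)
    show "integrable M (\<lambda>\<omega>. real j ^ j / (s/2) ^ j * exp (- (s/2) * Dsum X k \<omega>))"
      using EE_int[of "s/2" k 0] s by simp
    fix \<omega>
    have "Dsum X k \<omega> ^ j * exp (- s * Dsum X k \<omega>) = (Dsum X k \<omega> ^ j * exp (- (s/2) * Dsum X k \<omega>)) * exp (- (s/2) * Dsum X k \<omega>)"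
      by (simp add: mult.assoc flip: exp_add)
    also have "\<dots> \<le> real j ^ j / (s/2) ^ j * exp (- (s/2) * Dsum X k \<omega>)"
      using s Dsum_nn by (intro mult_right_mono pow_exp_bound) auto
    finally show "Dsum X k \<omega> ^ j * exp (- s * Dsum X k \<omega>) \<le> real j ^ j / (s/2) ^ j * exp (- (s/2) * Dsum X k \<omega>)" .
  qed
  also have "\<dots> = real j ^ j / (s/2) ^ j * EE M X k 0 (s/2)" unfolding EE_def by simp
  also have "\<dots> = real j ^ j / (s/2) ^ j * L (s/2) ^ k" using s by (simp add: EE0)
  finally show ?thesis .
qed

lemma EE_mono: assumes "0 < s" "s \<le> t" shows "EE M X k j t \<le> EE M X k j s"
  unfolding EE_def
proof (intro integral_mono EE_int)
  fix \<omega>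
  have "exp (- t * Dsum X k \<omega>) \<le> exp (- s * Dsum X k \<omega>)"
    using assms Dsum_nn[of k \<omega>] by (simp add: mult_right_mono)
  thus "Dsum X k \<omega> ^ j * exp (- t * Dsum X k \<omega>) \<le> Dsum X k \<omega> ^ j * exp (- s * Dsum X k \<omega>)"
    using Dsum_nn[of k \<omega>] by (intro mult_left_mono) auto
qed (use assms in auto)

lemma EE_deriv: "s > 0 \<Longrightarrow> ((\<lambda>s. EE M X k j s) has_real_derivative - EE M X k (Suc j) s) (at s)"
  unfolding EE_def by (intro deriv_moment_exp Dsum_meas Dsum_nn)

end
definition Gser :: "'a measure \<Rightarrow> (nat \<Rightarrow> 'a \<Rightarrow> real) \<Rightarrow> (nat \<Rightarrow> real) \<Rightarrow> nat \<Rightarrow> real \<Rightarrow> real" where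
  "Gser M X w j s = (\<Sum>k. w k * (-1) ^ j * EE M X (Suc k) j s)"

context core
begin

context
  fixes w :: "nat \<Rightarrow> real"
  assumes w0: "\<And>k. 0 \<le> w k" and w1: "\<And>k. w k \<le> real (Suc k)"
begin

lemma G_summable: assumes s: "s > 0" shows "summable (\<lambda>k. w k * EE M X (Suc k) j s)"
proof -
  define C where "C = real j ^ j / (s/2) ^ j"
  define r where "r = L (s/2)"
  have r: "0 \<le> r" "r < 1" unfolding r_def using s by (auto intro: L_nn L_lt1)
  have C: "C \<ge> 0" unfolding C_def using s by simp
  have "summable (\<lambda>k. (C * r) * (real (Suc k) * r ^ k))"
    using geometric_deriv_sums[of r] r by (intro summable_mult) (auto simp: sums_iff)
  moreover have "norm (w k * EE M X (Suc k) j s) \<le> (C * r) * (real (Suc k) * r ^ k)" for k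
  proof -
    have "norm (w k * EE M X (Suc k) j s) = w k * EE M X (Suc k) j s"
      using w0[of k] EE_nn by simp
    also have "\<dots> \<le> real (Suc k) * (C * r ^ Suc k)"
      using EE_bound[OF s, of "Suc k" j] w1[of k] w0[of k] EE_nn C r
      unfolding C_def[symmetric] r_def[symmetric]
      by (intro mult_mono) auto
    also have "\<dots> = (C * r) * (real (Suc k) * r ^ k)" by (simp add: algebra_simps)
    finally show ?thesis .
  qed
  ultimately show ?thesis by (rule summable_comparison_test'[where N=0])
qed

lemma G_deriv: assumes s: "s > 0"
  shows "(Gser M X w j has_real_derivative Gser M X w (Suc j) s) (at s)"
proof -
  define S where "S = {s/2<..}"
  have "((\<lambda>x. \<Sum>n. w n * (-1) ^ j * EE M X (Suc n) j x) has_field_derivative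
          (\<Sum>n. w n * (-1) ^ Suc j * EE M X (Suc n) (Suc j) s)) (at s)"
  proof (rule has_field_derivative_series'(2)[where S=S and x0=s])
    show "convex S" unfolding S_def by simp
    show "s \<in> S" using s by (auto simp: S_def)
    show "s \<in> interior S" using s unfolding S_def by (subst interior_open) auto
    show "((\<lambda>x. w n * (-1) ^ j * EE M X (Suc n) j x) has_field_derivative
           w n * (-1) ^ Suc j * EE M X (Suc n) (Suc j) x) (at x within S)" if "x \<in> S" for n x
    proof -
      have x: "x > 0" using that s by (auto simp: S_def)
      have "((\<lambda>x. w n * (-1) ^ j * EE M X (Suc n) j x) has_real_derivative
           w n * (-1) ^ j * (- EE M X (Suc n) (Suc j) x)) (at x)"
        by (intro DERIV_cmult EE_deriv x)
      moreover have "w n * (-1) ^ j * (- EE M X (Suc n) (Suc j) x) = w n * (-1) ^ Suc j * EE M X (Suc n) (Suc j) x"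
        by simp
      ultimately show ?thesis by (metis has_field_derivative_at_within)
    qed
    show "uniformly_convergent_on S (\<lambda>n x. \<Sum>i<n. w i * (-1) ^ Suc j * EE M X (Suc i) (Suc j) x)"
    proof (rule Weierstrass_m_test'[where M="\<lambda>n. w n * EE M X (Suc n) (Suc j) (s/2)"])
      show "summable (\<lambda>n. w n * EE M X (Suc n) (Suc j) (s/2))" using s by (intro G_summable) auto
      fix n x assume "x \<in> S"
      hence "EE M X (Suc n) (Suc j) x \<le> EE M X (Suc n) (Suc j) (s/2)"
        using s by (intro EE_mono) (auto simp: S_def)
      moreover have "norm (w n * (-1) ^ Suc j * EE M X (Suc n) (Suc j) x) = w n * EE M X (Suc n) (Suc j) x"
        using w0[of n] EE_nn[of "Suc n" "Suc j" x] by (simp add: abs_mult power_abs)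
      ultimately show "norm (w n * (-1) ^ Suc j * EE M X (Suc n) (Suc j) x) \<le> w n * EE M X (Suc n) (Suc j) (s/2)"
        using w0[of n] by (metis mult_left_mono)
    qed
    show "summable (\<lambda>n. w n * (-1) ^ j * EE M X (Suc n) j s)"
      using summable_mult2[OF G_summable[OF s, of j], of "(-1)^j"] by (simp only: mult.assoc mult.commute[of "(-1)^j"])
  qed
  moreover have "Gser M X w j = (\<lambda>x. \<Sum>n. w n * (-1) ^ j * EE M X (Suc n) j x)"
    by (simp add: Gser_def[abs_def])
  ultimately show ?thesis by (simp add: Gser_def)
qed

lemma deriv_iter_G:
  assumes F: "\<And>s. s > 0 \<Longrightarrow> (\<lambda>k. w k * L s ^ Suc k) sums F s"
  shows "s > 0 \<Longrightarrow> (deriv ^^ j) F s = Gser M X w j s"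
proof (induction j arbitrary: s)
  case 0
  have "(\<lambda>k. w k * (-1) ^ 0 * EE M X (Suc k) 0 s) = (\<lambda>k. w k * L s ^ Suc k)"
    using 0 by (simp add: EE0 del: power_Suc)
  thus ?case using F[OF 0] by (simp add: Gser_def sums_iff del: power_Suc)
next
  case (Suc j)
  have ev: "eventually (\<lambda>t. (deriv ^^ j) F t = Gser M X w j t) (nhds s)"
  proof -
    have "eventually (\<lambda>t. t \<in> {0<..}) (nhds s)" using Suc.prems by (intro eventually_nhds_in_open) auto
    thus ?thesis by eventually_elim (use Suc.IH in auto)
  qed
  have "((deriv ^^ j) F has_real_derivative Gser M X w (Suc j) s) (at s)"
    using DERIV_cong_ev[OF refl ev refl] G_deriv[OF Suc.prems] by simp
  thus ?case by (simp add: DERIV_imp_deriv)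
qed

end
end


definition psi :: "nat \<Rightarrow> real \<Rightarrow> real \<Rightarrow> real \<Rightarrow> real" where
  "psi n mu lam x = (if lam \<noteq> mu then mu ^ n / (mu - lam) ^ n * (exp (- lam * x) -
      (\<Sum>i<n. (mu - lam) ^ i / fact i * (x ^ i * exp (- mu * x))))
     else mu ^ n / fact n * (x ^ n * exp (- mu * x)))"

context core
begin

lemma EE_sums:
  assumes w0: "\<And>k. 0 \<le> w k" and w1: "\<And>k. w k \<le> real (Suc k)"
    and F: "\<And>s. s > 0 \<Longrightarrow> (\<lambda>k. w k * L s ^ Suc k) sums F s"
    and s: "s > 0"
  shows "(\<lambda>k. w k * EE M X (Suc k) i s) sums ((-1) ^ i * (deriv ^^ i) F s)"
proof -
  have sm: "summable (\<lambda>k. w k * EE M X (Suc k) i s)" by (rule G_summable[OF w0 w1 s])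
  have "Gser M X w i s = (-1) ^ i * (\<Sum>k. w k * EE M X (Suc k) i s)"
    unfolding Gser_def using suminf_mult[OF sm, of "(-1)^i"] by (simp add: mult_ac)
  hence "(-1) ^ i * Gser M X w i s = (\<Sum>k. w k * EE M X (Suc k) i s)"
    by (simp add: flip: power_mult_distrib)
  moreover have "(deriv ^^ i) F s = Gser M X w i s" by (rule deriv_iter_G[OF w0 w1 F s])
  ultimately show ?thesis using sm by (simp add: sums_iff)
qed

lemma core_sum:
  fixes n :: nat and mu lam :: real
  assumes n: "n \<ge> 1" and mu: "mu > 0" and lam: "lam > 0"
    and w0: "\<And>k. 0 \<le> w k" and w1: "\<And>k. w k \<le> real (Suc k)"
    and F: "\<And>s. s > 0 \<Longrightarrow> (\<lambda>k. w k * L s ^ Suc k) sums F s"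
  shows "(\<lambda>k. w k * (\<integral>\<omega>. psi n mu lam (Dsum X (Suc k) \<omega>) \<partial>M)) sums
    (if lam \<noteq> mu then mu ^ n / (mu - lam) ^ n * (F lam -
                (\<Sum>i<n. (mu - lam) ^ i / fact i * (-1) ^ i * (deriv ^^ i) F mu))
            else mu ^ n / fact n * (-1) ^ n * (deriv ^^ n) F mu)"
proof (cases "lam = mu")
  case True
  have "(\<integral>\<omega>. psi n mu lam (Dsum X (Suc k) \<omega>) \<partial>M) = mu ^ n / fact n * EE M X (Suc k) n mu" for k
    using True unfolding psi_def EE_def by simp
  moreover have "(\<lambda>k. mu ^ n / fact n * (w k * EE M X (Suc k) n mu)) sums (mu ^ n / fact n * ((-1) ^ n * (deriv ^^ n) F mu))"
    by (intro sums_mult EE_sums w0 w1 F mu)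
  ultimately show ?thesis using True by (simp add: mult_ac)
next
  case False
  define a where "a = mu - lam"
  have "(\<integral>\<omega>. psi n mu lam (Dsum X (Suc k) \<omega>) \<partial>M) =
      mu ^ n / a ^ n * (EE M X (Suc k) 0 lam - (\<Sum>i<n. a ^ i / fact i * EE M X (Suc k) i mu))" for k
  proof -
    have i1: "integrable M (\<lambda>\<omega>. exp (- lam * Dsum X (Suc k) \<omega>))"
      using EE_int[OF lam, of "Suc k" 0] by simp
    have i2: "integrable M (\<lambda>\<omega>. \<Sum>i<n. a ^ i / fact i * (Dsum X (Suc k) \<omega> ^ i * exp (- mu * Dsum X (Suc k) \<omega>)))"
      by (intro Bochner_Integration.integrable_sum Bochner_Integration.integrable_mult_right EE_int[OF mu])
    have "(\<integral>\<omega>. psi n mu lam (Dsum X (Suc k) \<omega>) \<partial>M) = (\<integral>\<omega>. mu ^ n / a ^ n *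
       (exp (- lam * Dsum X (Suc k) \<omega>) -
        (\<Sum>i<n. a ^ i / fact i * (Dsum X (Suc k) \<omega> ^ i * exp (- mu * Dsum X (Suc k) \<omega>)))) \<partial>M)"
      using False unfolding psi_def a_def[symmetric] by simp
    also have "\<dots> = mu ^ n / a ^ n *
       ((\<integral>\<omega>. exp (- lam * Dsum X (Suc k) \<omega>) \<partial>M) -
        (\<integral>\<omega>. (\<Sum>i<n. a ^ i / fact i * (Dsum X (Suc k) \<omega> ^ i * exp (- mu * Dsum X (Suc k) \<omega>))) \<partial>M))"
      by (simp only: integral_mult_right_zero Bochner_Integration.integral_diff[OF i1 i2])
    also have "(\<integral>\<omega>. (\<Sum>i<n. a ^ i / fact i * (Dsum X (Suc k) \<omega> ^ i * exp (- mu * Dsum X (Suc k) \<omega>))) \<partial>M)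
        = (\<Sum>i<n. a ^ i / fact i * EE M X (Suc k) i mu)"
    proof -
      have ints: "\<And>i. integrable M (\<lambda>\<omega>. a ^ i / fact i * (Dsum X (Suc k) \<omega> ^ i * exp (- mu * Dsum X (Suc k) \<omega>)))"
        by (intro Bochner_Integration.integrable_mult_right EE_int[OF mu])
      show ?thesis unfolding EE_def by (subst Bochner_Integration.integral_sum[OF ints]) simp
    qed
    finally show ?thesis unfolding EE_def by simp
  qed
  moreover have "(\<lambda>k. mu ^ n / a ^ n * (w k * EE M X (Suc k) 0 lam - (\<Sum>i<n. a ^ i / fact i * (w k * EE M X (Suc k) i mu))))
     sums (mu ^ n / a ^ n * ((-1) ^ 0 * (deriv ^^ 0) F lam - (\<Sum>i<n. a ^ i / fact i * ((-1) ^ i * (deriv ^^ i) F mu))))"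
    by (intro sums_mult sums_diff sums_sum EE_sums w0 w1 F mu lam)
  ultimately show ?thesis using False
    by (simp add: a_def mult_ac right_diff_distrib sum_distrib_left)
qed

end


lemma exp_taylor_deriv:
  fixes a :: real
  shows "((\<lambda>t. exp (- a * t) * (\<Sum>i<Suc m. (a * t) ^ i / fact i)) has_real_derivative
           (- a * exp (- a * t) * (a * t) ^ m / fact m)) (at t)"
proof (induction m)
  case 0
  show ?case by (auto intro!: derivative_eq_intros)
next
  case (Suc m)
  have eq: "(\<lambda>t. exp (- a * t) * (\<Sum>i<Suc (Suc m). (a * t) ^ i / fact i)) =
     (\<lambda>t. exp (- a * t) * (\<Sum>i<Suc m. (a * t) ^ i / fact i) + exp (- a * t) * ((a * t) ^ Suc m / fact (Suc m)))"
    by (simp add: algebra_simps)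
  have d2: "((\<lambda>t. exp (- a * t) * ((a * t) ^ Suc m / fact (Suc m))) has_real_derivative
      (exp (- a * t) * (- a) * ((a * t) ^ Suc m / fact (Suc m)) + exp (- a * t) * (real (Suc m) * (a * t) ^ m * a / fact (Suc m)))) (at t)"
    by (auto intro!: derivative_eq_intros simp del: power_Suc fact_Suc simp: diff_divide_distrib mult_ac)
  have "((\<lambda>t. exp (- a * t) * (\<Sum>i<Suc (Suc m). (a * t) ^ i / fact i)) has_real_derivative
      (- a * exp (- a * t) * (a * t) ^ m / fact m) +
      (exp (- a * t) * (- a) * ((a * t) ^ Suc m / fact (Suc m)) + exp (- a * t) * (real (Suc m) * (a * t) ^ m * a / fact (Suc m)))) (at t)"
    unfolding eq by (intro DERIV_add Suc.IH d2)
  moreover have "(- a * exp (- a * t) * (a * t) ^ m / fact m) +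
      (exp (- a * t) * (- a) * ((a * t) ^ Suc m / fact (Suc m)) + exp (- a * t) * (real (Suc m) * (a * t) ^ m * a / fact (Suc m)))
      = - a * exp (- a * t) * (a * t) ^ Suc m / fact (Suc m)"
    by (simp add: field_simps del: fact_Suc) (simp add: fact_Suc algebra_simps)
  ultimately show ?case by (simp only:)
qed


lemma taylor_at0: "(\<Sum>i<Suc m. ((a::real) * 0) ^ i / fact i) = 1"
  by (induction m) auto

lemma gamma_inner:
  fixes x lam mu :: real
  assumes n: "n \<ge> 1"
  shows "exp (- lam * x) * (\<integral>t\<in>{0..x}. exp (lam * t) * gamma_density n mu t \<partial>lborel) =
         (if 0 \<le> x then psi n mu lam x else 0)"
proof (cases "0 \<le> x")
  case False
  hence "{0..x} = {}" by auto
  thus ?thesis using False by (simp add: set_lebesgue_integral_def)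
next
  case x: True
  obtain m where m: "n = Suc m" using n by (cases n) auto
  define a where "a = mu - lam"
  define f where "f t = mu ^ n / fact m * t ^ m * exp (- a * t)" for t
  have "(\<integral>t\<in>{0..x}. exp (lam * t) * gamma_density n mu t \<partial>lborel) =
        (\<integral>t. indicator {0..x} t *\<^sub>R f t \<partial>lborel)"
    unfolding set_lebesgue_integral_def
  proof (rule integral_cong_AE)
    show "(\<lambda>t. indicator {0..x} t *\<^sub>R (exp (lam * t) * gamma_density n mu t)) \<in> borel_measurable lborel"
      unfolding gamma_density_def by measurable
    show "(\<lambda>t. indicator {0..x} t *\<^sub>R f t) \<in> borel_measurable lborel"
      unfolding f_def by measurable
    show "AE t in lborel. indicator {0..x} t *\<^sub>R (exp (lam * t) * gamma_density n mu t) = indicator {0..x} t *\<^sub>R f t"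
      using AE_lborel_singleton[of "0::real"]
    proof eventually_elim
      case (elim t)
      show ?case
      proof (cases "t \<in> {0..x}")
        case True
        hence "t > 0" using elim by auto
        thus ?thesis using True by (simp add: gamma_density_def f_def m a_def algebra_simps flip: exp_add)
      qed simp
    qed
  qed
  also have "\<dots> = (if lam \<noteq> mu then mu ^ n / a ^ n * (1 - exp (- a * x) * (\<Sum>i<n. (a * x) ^ i / fact i))
                   else mu ^ n / fact n * x ^ n)"
  proof (cases "lam = mu")
    case True
    have "(\<integral>t. indicator {0..x} t *\<^sub>R f t \<partial>lborel) = mu ^ n / fact n * x ^ n - mu ^ n / fact n * 0 ^ n"
    proof (rule integral_FTC_atLeastAtMost[OF x])
      show "continuous_on {0..x} f" unfolding f_def by (intro continuous_intros)
      fix t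
      have "((\<lambda>t. mu ^ n / fact n * t ^ n) has_real_derivative mu ^ n / fact n * (real n * t ^ (n - Suc 0))) (at t)"
        by (intro DERIV_cmult DERIV_pow)
      moreover have "mu ^ n / fact n * (real n * t ^ (n - Suc 0)) = f t"
        using True unfolding f_def a_def m by (simp add: fact_Suc del: of_nat_Suc)
      ultimately have "((\<lambda>t. mu ^ n / fact n * t ^ n) has_real_derivative f t) (at t)" by simp
      thus "((\<lambda>t. mu ^ n / fact n * t ^ n) has_vector_derivative f t) (at t within {0..x})"
        by (simp add: has_real_derivative_iff_has_vector_derivative has_vector_derivative_at_within)
    qed
    thus ?thesis using True m by simp
  next
    case False
    hence a: "a \<noteq> 0" by (simp add: a_def)
    define Phi where "Phi t = - (mu ^ n / a ^ n) * (exp (- a * t) * (\<Sum>i<n. (a * t) ^ i / fact i))" for t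
    have "(\<integral>t. indicator {0..x} t *\<^sub>R f t \<partial>lborel) = Phi x - Phi 0"
    proof (rule integral_FTC_atLeastAtMost[OF x])
      show "continuous_on {0..x} f" unfolding f_def by (intro continuous_intros)
      fix t
      have "(Phi has_real_derivative (- (mu ^ n / a ^ n)) * (- a * exp (- a * t) * (a * t) ^ m / fact m)) (at t)"
        unfolding Phi_def m by (intro DERIV_cmult exp_taylor_deriv)
      moreover have "(- (mu ^ n / a ^ n)) * (- a * exp (- a * t) * (a * t) ^ m / fact m) = f t"
        using a unfolding f_def m by (simp add: field_simps power_mult_distrib)
      ultimately show "(Phi has_vector_derivative f t) (at t within {0..x})"
        by (simp add: has_real_derivative_iff_has_vector_derivative has_vector_derivative_at_within)
    qed
    also have "Phi x - Phi 0 = mu ^ n / a ^ n * (1 - exp (- a * x) * (\<Sum>i<n. (a * x) ^ i / fact i))"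
      unfolding Phi_def m using taylor_at0[where a=a and m=m] by (simp add: algebra_simps)
    finally show ?thesis using False by simp
  qed
  finally have I: "(\<integral>t\<in>{0..x}. exp (lam * t) * gamma_density n mu t \<partial>lborel) = \<dots>" .
  have S: "exp (- lam * x) * (exp (- a * x) * (\<Sum>i<n. (a * x) ^ i / fact i)) =
        (\<Sum>i<n. a ^ i / fact i * (x ^ i * exp (- mu * x)))"
  proof -
    have e: "exp (- lam * x) * exp (- a * x) = exp (- mu * x)" by (simp add: a_def algebra_simps flip: exp_add)
    show ?thesis unfolding sum_distrib_left
    proof (intro sum.cong refl)
      fix i
      have "exp (- lam * x) * (exp (- a * x) * ((a * x) ^ i / fact i)) = (exp (- lam * x) * exp (- a * x)) * ((a * x) ^ i / fact i)"
        by (simp only: mult.assoc)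
      also have "\<dots> = a ^ i / fact i * (x ^ i * exp (- mu * x))" unfolding e by (simp add: power_mult_distrib)
      finally show "exp (- lam * x) * (exp (- a * x) * ((a * x) ^ i / fact i)) = a ^ i / fact i * (x ^ i * exp (- mu * x))" .
    qed
  qed
  show ?thesis
  proof (cases "lam = mu")
    case True thus ?thesis using x I by (simp add: psi_def algebra_simps)
  next
    case False
    have "exp (- lam * x) * (mu ^ n / a ^ n * (1 - exp (- a * x) * (\<Sum>i<n. (a * x) ^ i / fact i))) =
          mu ^ n / a ^ n * (exp (- lam * x) - exp (- lam * x) * (exp (- a * x) * (\<Sum>i<n. (a * x) ^ i / fact i)))"
      by (simp add: algebra_simps)
    thus ?thesis using x I False S by (simp add: psi_def a_def)
  qed
qed



theorem mainTheorem7: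
  fixes M :: "'a measure" and X :: "nat \<Rightarrow> 'a \<Rightarrow> real"
    and n :: nat and mu lam :: real
  assumes "prob_space M"
    and "n \<ge> 1" and "mu > 0" and "lam > 0"
    and meas: "\<And>i. X i \<in> borel_measurable M"
    and indep: "prob_space.indep_vars M (\<lambda>_. borel) X UNIV"
    and ident: "\<And>i. distr M borel (X i) = distr M borel (X 0)"
    and pos: "AE \<omega> in M. X 0 \<omega> > 0"
    and sq: "integrable M (\<lambda>\<omega>. (X 0 \<omega>)\<^sup>2)"
  defines "g \<equiv> (\<lambda>k. \<integral>\<omega>. exp (- lam * (\<Sum>i<k. X i \<omega>)) *
                 (\<integral>t\<in>{0..(\<Sum>i<k. X i \<omega>)}. exp (lam * t) * gamma_density n mu t \<partial>lborel) \<partial>M)"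
    and "F1 \<equiv> (\<lambda>s. laplace_rv M (X 0) s / (1 - laplace_rv M (X 0) s))"
    and "F2 \<equiv> (\<lambda>s. laplace_rv M (X 0) s / (1 - laplace_rv M (X 0) s)\<^sup>2)"
  shows "((\<lambda>k. g (Suc k)) sums
           (if lam \<noteq> mu then
              mu ^ n / (mu - lam) ^ n * (F1 lam -
                (\<Sum>i<n. (mu - lam) ^ i / fact i * (-1) ^ i * (deriv ^^ i) F1 mu))
            else mu ^ n / fact n * (-1) ^ n * (deriv ^^ n) F1 mu)) \<and>
         ((\<lambda>k. real (Suc k) * g (Suc k)) sums
           (if lam \<noteq> mu then
              mu ^ n / (mu - lam) ^ n * (F2 lam -
                (\<Sum>i<n. (mu - lam) ^ i / fact i * (-1) ^ i * (deriv ^^ i) F2 mu))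
            else mu ^ n / fact n * (-1) ^ n * (deriv ^^ n) F2 mu))"
  proof -
  interpret P: prob_space M by fact
  define Y where "Y = (\<lambda>i \<omega>. max 0 (X i \<omega>))"
  have Ymeas: "Y i \<in> borel_measurable M" for i unfolding Y_def using meas by measurable
  have AEpos: "AE \<omega> in M. \<forall>i. X i \<omega> > 0"
  proof -
    have "AE \<omega> in M. X i \<omega> > 0" for i
    proof -
      have a0: "AE x in distr M borel (X 0). x > 0" using pos meas by (subst AE_distr_iff) auto
      have "AE x in distr M borel (X i). x > 0" unfolding ident[of i] by (rule a0)
      thus ?thesis using meas by (subst (asm) AE_distr_iff) auto
    qed
    thus ?thesis by (simp add: AE_all_countable)
  qed
  have C: "core M Y"
    unfolding core_def core_axioms_def
  proof (intro conjI allI)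
    show "prob_space M" by fact
    show "Y i \<in> borel_measurable M" for i by (rule Ymeas)
    show "P.indep_vars (\<lambda>_. borel) Y UNIV"
      unfolding Y_def by (rule P.indep_vars_compose2[OF indep]) measurable
    show "distr M borel (Y i) = distr M borel (Y 0)" for i
    proof -
      have "distr M borel (Y i) = distr (distr M borel (X i)) borel (\<lambda>x. max 0 x)" for i
        using meas by (subst distr_distr) (auto simp: Y_def comp_def)
      thus ?thesis using ident[of i] by simp
    qed
    show "Y i \<omega> \<ge> 0" for i \<omega> by (simp add: Y_def)
    show "AE \<omega> in M. Y 0 \<omega> > 0" using pos by eventually_elim (simp add: Y_def)
  qed
  have Lap: "laplace_rv M (Y 0) = laplace_rv M (X 0)"
  proof
    fix s
    show "laplace_rv M (Y 0) s = laplace_rv M (X 0) s"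
      unfolding laplace_rv_def
    proof (rule integral_cong_AE)
      show "(\<lambda>\<omega>. exp (- s * Y 0 \<omega>)) \<in> borel_measurable M" using Ymeas by measurable
      show "(\<lambda>\<omega>. exp (- s * X 0 \<omega>)) \<in> borel_measurable M" using meas by measurable
      show "AE \<omega> in M. exp (- s * Y 0 \<omega>) = exp (- s * X 0 \<omega>)"
        using pos by eventually_elim (simp add: Y_def)
    qed
  qed
  have g_eq: "g k = (\<integral>\<omega>. psi n mu lam (Dsum Y k \<omega>) \<partial>M)" for k
  proof -
    have "g k = (\<integral>\<omega>. (if 0 \<le> (\<Sum>i<k. X i \<omega>) then psi n mu lam (\<Sum>i<k. X i \<omega>) else 0) \<partial>M)"
      unfolding g_def using assms(2) by (intro Bochner_Integration.integral_cong refl gamma_inner)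
    also have "\<dots> = (\<integral>\<omega>. psi n mu lam (Dsum Y k \<omega>) \<partial>M)"
    proof (rule integral_cong_AE)
      show "(\<lambda>\<omega>. if 0 \<le> (\<Sum>i<k. X i \<omega>) then psi n mu lam (\<Sum>i<k. X i \<omega>) else 0) \<in> borel_measurable M"
        unfolding psi_def using meas by measurable
      show "(\<lambda>\<omega>. psi n mu lam (Dsum Y k \<omega>)) \<in> borel_measurable M"
        unfolding psi_def using core.Dsum_meas[OF C] by measurable
      show "AE \<omega> in M. (if 0 \<le> (\<Sum>i<k. X i \<omega>) then psi n mu lam (\<Sum>i<k. X i \<omega>) else 0) = psi n mu lam (Dsum Y k \<omega>)"
        using AEpos
      proof eventually_elim
        case (elim \<omega>)
        have e: "(\<Sum>i<k. X i \<omega>) = Dsum Y k \<omega>"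
          using elim by (auto simp: Dsum_def Y_def intro!: sum.cong)
        have "0 \<le> (\<Sum>i<k. X i \<omega>)"
          using elim by (intro sum_nonneg) (auto intro: less_imp_le)
        thus ?case using e by simp
      qed
    qed
    finally show ?thesis .
  qed
  have L01: "0 \<le> laplace_rv M (X 0) s" "laplace_rv M (X 0) s < 1" if "s > 0" for s
    using core.L_nn[OF C, of s] core.L_lt1[OF C that] Lap by auto
  have S1: "(\<lambda>k. 1 * laplace_rv M (Y 0) s ^ Suc k) sums F1 s" if "s > 0" for s
  proof -
    have "(\<lambda>k. laplace_rv M (X 0) s * laplace_rv M (X 0) s ^ k) sums (laplace_rv M (X 0) s * (1 / (1 - laplace_rv M (X 0) s)))"
      using L01[OF that] by (intro sums_mult geometric_sums) auto
    thus ?thesis unfolding assms(11) Lap by simp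
  qed
  have S2: "(\<lambda>k. real (Suc k) * laplace_rv M (Y 0) s ^ Suc k) sums F2 s" if "s > 0" for s
  proof -
    have "(\<lambda>k. laplace_rv M (X 0) s * (real (Suc k) * laplace_rv M (X 0) s ^ k)) sums (laplace_rv M (X 0) s * (1 / (1 - laplace_rv M (X 0) s)^2))"
      using L01[OF that] by (intro sums_mult geometric_deriv_sums) auto
    thus ?thesis unfolding assms(12) Lap by (simp add: mult_ac)
  qed
  have w10: "\<And>k::nat. 0 \<le> (1::real)" and w11: "\<And>k::nat. (1::real) \<le> real (Suc k)" by simp_all
  have w20: "\<And>k::nat. 0 \<le> real (Suc k)" and w21: "\<And>k::nat. real (Suc k) \<le> real (Suc k)" by simp_all
  note R1 = core.core_sum[OF C assms(2,3,4), where w="\<lambda>_. 1" and F=F1, OF w10 w11 S1]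
  note R2 = core.core_sum[OF C assms(2,3,4), where w="\<lambda>k. real (Suc k)" and F=F2, OF w20 w21 S2]
  show ?thesis using R1 R2 by (simp add: g_eq)
qed

end
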